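(* Let $n\ge 2$ and $p>1$, let $h=h^{(n)}$ be the normalized Hermite roots and let $f$ be the monic polynomial with roots $h$. Then the $\ell^p$-contraction ratio $\eta_p:=\|E_n s_n(h)\|_p/\|s_n(h)\|_p$ equals $2^{-1/2}$ for every $p>1$, and consequently the $p$-Stam deficit at the Hermite pair satisfies $g_p(h,h)>0$ for $1<p<2$, $g_2(h,h)=0$, and $g_p(h,h)<0$ for $p>2$. In particular, the $p$-Stam inequality $\Phi_{n,p}(f\boxplus_n g)^{-1/(p-1)}\ge\Phi_{n,p}(f)^{-1/(p-1)}+\Phi_{n,p}(g)^{-1/(p-1)}$ fails for every $p>2$ (witnessed by $f=g$ with roots $h$).
   Context: Score vector: $s_n(\alpha)_i=\sum_{j\ne i}(\alpha_i-\alpha_j)^{-1}$ for simple real roots $\alpha$. $p$-Fisher information: $\Phi_{n,p}(f)=\|s_n(\alpha)\|_p^p$. Finite free additive convolution $f\boxplus_n g$: for $f=\sum(-1)^ka_kx^{n-k}$, $g=\sum(-1)^kb_kx^{n-k}$ monic real-rooted of degree $n$, $f\boxplus_n g=\sum(-1)^kc_kx^{n-k}$ with $c_k=\sum_{i+j=k}\frac{(n-i)!(n-j)!}{n!(n-k)!}a_ib_j$. Root map $\Omega_{\boxplus_n}(\alpha,\beta)$: sorted roots of $f\boxplus_n g$. $h=h^{(n)}$: ordered roots of the probabilists' Hermite polynomial $\mathrm{He}_n$ normalized to mean $0$, variance $1$. Hermite coupling matrix $E_n:=\partial_\alpha\Omega_{\boxplus_n}(\alpha,h)|_{\alpha=h}$;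 at the symmetric point one has $s_n(\Omega_{\boxplus_n}(h,h))=E_n s_n(h)$. $p$-Stam deficit: $g_p(f,g)=\Phi_{n,p}(f\boxplus_n g)^{-1/(p-1)}-\Phi_{n,p}(f)^{-1/(p-1)}-\Phi_{n,p}(g)^{-1/(p-1)}$. *)

theory Defs
  imports "HOL-Analysis.Analysis" "HOL-Computational_Algebra.Polynomial"
begin

text \<open>Vectors in R^n are represented as functions nat => real; only indices i < n matter.\<close>

definition poly_of_roots :: "nat \<Rightarrow> (nat \<Rightarrow> real) \<Rightarrow> real poly" where
  "poly_of_roots n \<alpha> = (\<Prod>i<n. [:- \<alpha> i, 1:])"

definition sorted_roots :: "nat \<Rightarrow> real poly \<Rightarrow> (nat \<Rightarrow> real)" where
  "sorted_roots n P = (SOME \<gamma>. (\<forall>i j. i \<le> j \<and> j < n \<longrightarrow> \<gamma> i \<le> \<gamma> j)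
                        \<and> (\<forall>i. n \<le> i \<longrightarrow> \<gamma> i = 0) \<and> poly_of_roots n \<gamma> = P)"

definition ffconv :: "nat \<Rightarrow> real poly \<Rightarrow> real poly \<Rightarrow> real poly" where
  "ffconv n f g =
     (let a = (\<lambda>k. (-1) ^ k * coeff f (n - k));
          b = (\<lambda>k. (-1) ^ k * coeff g (n - k));
          c = (\<lambda>k. \<Sum>i\<le>k. (fact (n - i) * fact (n - (k - i))) / (fact n * fact (n - k)) * a i * b (k - i))
      in \<Sum>k\<le>n. monom ((-1) ^ k * c k) (n - k))"

definition Omega :: "nat \<Rightarrow> (nat \<Rightarrow> real) \<Rightarrow> (nat \<Rightarrow> real) \<Rightarrow> (nat \<Rightarrow> real)" where
  "Omega n \<alpha> \<beta> = sorted_roots n (ffconv n (poly_of_roots n \<alpha>) (poly_of_roots n \<beta>))"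

fun hermite :: "nat \<Rightarrow> real poly" where
  "hermite 0 = 1"
| "hermite (Suc 0) = [:0, 1:]"
| "hermite (Suc (Suc n)) = [:0, 1:] * hermite (Suc n) - smult (real (Suc n)) (hermite n)"

definition hermite_roots :: "nat \<Rightarrow> (nat \<Rightarrow> real)" where
  "hermite_roots n =
     (let x = sorted_roots n (hermite n);
          \<mu> = (\<Sum>i<n. x i) / real n;
          v = (\<Sum>i<n. (x i - \<mu>)\<^sup>2) / real n
      in (\<lambda>i. if i < n then (x i - \<mu>) / sqrt v else 0))"

definition score :: "nat \<Rightarrow> (nat \<Rightarrow> real) \<Rightarrow> (nat \<Rightarrow> real)" where
  "score n \<alpha> i = (\<Sum>j\<in>{..<n} - {i}. 1 / (\<alpha> i - \<alpha> j))"

definition Phi :: "nat \<Rightarrow> real \<Rightarrow> (nat \<Rightarrow> real) \<Rightarrow> real" where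
  "Phi n p \<alpha> = (\<Sum>i<n. \<bar>score n \<alpha> i\<bar> powr p)"

definition pnorm :: "nat \<Rightarrow> real \<Rightarrow> (nat \<Rightarrow> real) \<Rightarrow> real" where
  "pnorm n p v = (\<Sum>i<n. \<bar>v i\<bar> powr p) powr (1 / p)"

definition Ematrix :: "nat \<Rightarrow> nat \<Rightarrow> nat \<Rightarrow> real" where
  "Ematrix n i j =
     deriv (\<lambda>t. Omega n ((hermite_roots n)(j := hermite_roots n j + t)) (hermite_roots n) i) 0"

definition contraction_ratio :: "nat \<Rightarrow> real \<Rightarrow> real" where
  "contraction_ratio n p =
     pnorm n p (\<lambda>i. \<Sum>j<n. Ematrix n i j * score n (hermite_roots n) j)
     / pnorm n p (score n (hermite_roots n))"

definition stam_deficit :: "nat \<Rightarrow> real \<Rightarrow> (nat \<Rightarrow> real) \<Rightarrow> (nat \<Rightarrow> real) \<Rightarrow> real" where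
  "stam_deficit n p \<alpha> \<beta> =
     Phi n p (Omega n \<alpha> \<beta>) powr (-1 / (p - 1)) - Phi n p \<alpha> powr (-1 / (p - 1))
       - Phi n p \<beta> powr (-1 / (p - 1))"

end

theory Submission
  imports Defs
begin

lemma poly_of_roots_poly: "poly (poly_of_roots n a) x = (\<Prod>i<n. x - a i)"
  by (simp add: poly_of_roots_def poly_prod)

lemma poly_of_roots_monic: "degree (poly_of_roots n a) = n \<and> lead_coeff (poly_of_roots n a) = 1"
proof (induction n)
  case 0 then show ?case by (simp add: poly_of_roots_def)
next
  case (Suc n)
  have e: "poly_of_roots (Suc n) a = poly_of_roots n a * [:- a n, 1:]"
    by (simp add: poly_of_roots_def)
  have nz: "poly_of_roots n a \<noteq> 0" using Suc by auto
  have d1: "degree [:- a n, 1:] = 1" "lead_coeff [:- a n, 1:] = 1" by simp_all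
  have nz2: "[:- a n, 1:] \<noteq> 0" by simp
  have "degree (poly_of_roots n a * [:- a n, 1:]) = Suc n"
    using Suc d1 degree_mult_eq[OF nz nz2] by (simp only:)
  moreover have "lead_coeff (poly_of_roots n a * [:- a n, 1:]) = 1"
    using Suc d1 lead_coeff_mult[of "poly_of_roots n a" "[:- a n, 1:]"] by (metis mult_1_right)
  ultimately show ?case unfolding e by blast
qed

lemma poly_of_roots_ne0: "poly_of_roots n a \<noteq> 0"
  using poly_of_roots_monic[of n a] by auto

lemma roots_dvd:
  fixes P :: "real poly"
  assumes inj: "\<forall>i j. i < j \<and> j < n \<longrightarrow> a i \<noteq> a j"
    and r: "\<forall>i<n. poly P (a i) = 0"
  shows "k \<le> n \<Longrightarrow> poly_of_roots k a dvd P"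
proof (induction k)
  case 0 then show ?case by (simp add: poly_of_roots_def)
next
  case (Suc k)
  then obtain q where q: "P = poly_of_roots k a * q" by (auto elim: dvdE)
  have "poly P (a k) = 0" using r Suc by auto
  moreover have "poly (poly_of_roots k a) (a k) \<noteq> 0"
  proof
    assume "poly (poly_of_roots k a) (a k) = 0"
    then obtain i where "i < k" "a k = a i" unfolding poly_of_roots_poly by (auto simp: prod_zero_iff)
    then show False using inj Suc.prems by (metis Suc_le_eq)
  qed
  ultimately have "poly q (a k) = 0" using q by simp
  then obtain q' where "q = [:- a k, 1:] * q'" by (metis dvdE poly_eq_0_iff_dvd)
  then have "P = poly_of_roots (Suc k) a * q'" using q unfolding poly_of_roots_def
    by (simp only: prod.lessThan_Suc mult.assoc)
  then show ?case by simp
qed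

lemma roots_to_prod:
  fixes P :: "real poly"
  assumes d: "degree P = n" and l: "lead_coeff P = 1"
    and inj: "\<forall>i j. i < j \<and> j < n \<longrightarrow> a i \<noteq> a j"
    and r: "\<forall>i<n. poly P (a i) = 0"
  shows "P = poly_of_roots n a"
proof -
  obtain q where q: "P = poly_of_roots n a * q" using roots_dvd[OF inj r, of n] by (auto elim: dvdE)
  have P0: "P \<noteq> 0" using l by auto
  then have q0: "q \<noteq> 0" using q by auto
  have "degree P = n + degree q" using q q0 poly_of_roots_monic[of n a] poly_of_roots_ne0[of n a]
    by (simp add: degree_mult_eq)
  then have "degree q = 0" using d by simp
  moreover have "lead_coeff q = 1" using q l poly_of_roots_monic[of n a] lead_coeff_mult[of "poly_of_roots n a" q] by (metis mult_1)
  ultimately have "q = 1" by (metis degree_0_id one_pCons pCons_0_0 lead_coeff_pCons(1) zero_neq_one coeff_pCons_0 leading_coeff_0_iff)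
  then show ?thesis using q by simp
qed

lemma roots_set_poly_of_roots: "{x. poly (poly_of_roots n a) x = 0} = a ` {..<n}"
  unfolding poly_of_roots_poly by (auto simp: prod_zero_iff)

lemma sorted_roots_eq:
  assumes mono: "\<forall>i j. i < j \<and> j < n \<longrightarrow> a i < a j"
    and zero: "\<forall>i. n \<le> i \<longrightarrow> a i = 0"
    and P: "poly_of_roots n a = P"
  shows "sorted_roots n P = a"
proof -
  define Q where "Q = (\<lambda>\<gamma>. (\<forall>i j. i \<le> j \<and> j < n \<longrightarrow> \<gamma> i \<le> (\<gamma> j::real))
                        \<and> (\<forall>i. n \<le> i \<longrightarrow> \<gamma> i = 0) \<and> poly_of_roots n \<gamma> = P)"
  have Qa: "Q a" unfolding Q_def using mono zero P by (metis order.order_iff_strict order.refl)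
  have sr: "sorted_roots n P = (SOME \<gamma>. Q \<gamma>)" unfolding sorted_roots_def Q_def by simp
  define b where "b = sorted_roots n P"
  have Qb: "Q b" unfolding b_def sr by (rule someI[of Q a, OF Qa])
  have setab: "a ` {..<n} = b ` {..<n}"
    using roots_set_poly_of_roots[of n a] roots_set_poly_of_roots[of n b] Qb P unfolding Q_def by simp
  have inja: "inj_on a {..<n}" unfolding inj_on_def using mono by (metis linorder_neqE_nat less_irrefl lessThan_iff)
  then have "card (a ` {..<n}) = n" by (simp add: card_image)
  then have "card (b ` {..<n}) = card {..<n}" using setab by simp
  then have injb: "inj_on b {..<n}" by (simp add: inj_on_iff_eq_card)
  have la: "sorted (map a [0..<n])" unfolding sorted_iff_nth_mono using mono
    by (auto simp: order.order_iff_strict)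
  have lb: "sorted (map b [0..<n])" unfolding sorted_iff_nth_mono using Qb unfolding Q_def by auto
  have da: "distinct (map a [0..<n])" using inja by (simp add: distinct_map atLeast0LessThan)
  have db: "distinct (map b [0..<n])" using injb by (simp add: distinct_map atLeast0LessThan)
  have "set (map a [0..<n]) = set (map b [0..<n])" using setab by (simp add: atLeast0LessThan)
  then have eq: "map a [0..<n] = map b [0..<n]" using sorted_distinct_set_unique la lb da db by blast
  have "a i = b i" for i
  proof (cases "i < n")
    case True
    then show ?thesis using arg_cong[OF eq, of "\<lambda>l. l ! i"] by simp
  next
    case False
    then show ?thesis using zero Qb unfolding Q_def by auto
  qed
  then show ?thesis unfolding b_def by auto
qed

lemma sorted_roots_of_roots:
  fixes P :: "real poly"
  assumes d: "degree P = n" and l: "lead_coeff P = 1"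
    and mono: "\<forall>i j. i < j \<and> j < n \<longrightarrow> a i < a j"
    and zero: "\<forall>i. n \<le> i \<longrightarrow> a i = 0"
    and r: "\<forall>i<n. poly P (a i) = 0"
  shows "sorted_roots n P = a \<and> P = poly_of_roots n a"
proof -
  have "P = poly_of_roots n a"
    by (rule roots_to_prod[OF d l _ r]) (use mono in force)
  then show ?thesis using sorted_roots_eq[OF mono zero] by simp
qed

lemma gap_exists:
  fixes \<gamma> :: "nat \<Rightarrow> real"
  assumes mono: "\<forall>i j. i < j \<and> j < n \<longrightarrow> \<gamma> i < \<gamma> j"
  shows "\<exists>\<delta>>0. \<forall>i j. i < j \<and> j < n \<longrightarrow> 2 * \<delta> < \<gamma> j - \<gamma> i"
proof -
  define D where "D = (\<lambda>(i,j). \<gamma> j - \<gamma> i) ` {(i,j). i < j \<and> j < n}"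
  have fin: "finite D" unfolding D_def
    by (rule finite_imageI, rule finite_subset[of _ "{..<n} \<times> {..<n}"]) auto
  define m where "m = Min (insert 1 D)"
  have mpos: "m > 0" unfolding m_def using fin 
    by (subst Min_gr_iff) (auto simp: D_def mono)
  have "\<forall>i j. i < j \<and> j < n \<longrightarrow> m \<le> \<gamma> j - \<gamma> i"
  proof (intro allI impI)
    fix i j assume "i < j \<and> j < n"
    then have "\<gamma> j - \<gamma> i \<in> insert 1 D" unfolding D_def by auto
    then show "m \<le> \<gamma> j - \<gamma> i" unfolding m_def using fin by (intro Min_le) auto
  qed
  then show ?thesis using mpos by (intro exI[of _ "m/3"]) (auto, smt (verit))
qed

lemma sign_change:
  fixes \<gamma> :: "nat \<Rightarrow> real"
  assumes i: "i < n" and e: "\<epsilon> > 0"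
    and sep: "\<forall>k<n. k \<noteq> i \<longrightarrow> \<epsilon> < \<bar>\<gamma> i - \<gamma> k\<bar>"
  shows "poly (poly_of_roots n \<gamma>) (\<gamma> i - \<epsilon>) * poly (poly_of_roots n \<gamma>) (\<gamma> i + \<epsilon>) < 0"
proof -
  have r: "poly (poly_of_roots n \<gamma>) x = (x - \<gamma> i) * (\<Prod>k\<in>{..<n}-{i}. x - \<gamma> k)" for x
    unfolding poly_of_roots_poly using i by (simp add: prod.remove)
  have "(\<Prod>k\<in>{..<n}-{i}. \<gamma> i - \<epsilon> - \<gamma> k) * (\<Prod>k\<in>{..<n}-{i}. \<gamma> i + \<epsilon> - \<gamma> k)
      = (\<Prod>k\<in>{..<n}-{i}. (\<gamma> i - \<epsilon> - \<gamma> k) * (\<gamma> i + \<epsilon> - \<gamma> k))"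
    by (simp add: prod.distrib)
  also have "\<dots> > 0"
  proof (rule prod_pos)
    fix k assume "k \<in> {..<n} - {i}"
    then have "k < n" "k \<noteq> i" by auto
    then have "\<epsilon> < \<bar>\<gamma> i - \<gamma> k\<bar>" using sep by auto
    then have "\<epsilon> * \<epsilon> < \<bar>\<gamma> i - \<gamma> k\<bar> * \<bar>\<gamma> i - \<gamma> k\<bar>" using e by (intro mult_strict_mono) auto
    also have "\<dots> = (\<gamma> i - \<gamma> k) * (\<gamma> i - \<gamma> k)" by (metis abs_mult_self_eq)
    finally have "\<epsilon> * \<epsilon> < (\<gamma> i - \<gamma> k) * (\<gamma> i - \<gamma> k)" .
    moreover have "(\<gamma> i - \<epsilon> - \<gamma> k) * (\<gamma> i + \<epsilon> - \<gamma> k) = (\<gamma> i - \<gamma> k) * (\<gamma> i - \<gamma> k) - \<epsilon> * \<epsilon>"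
      by (simp add: algebra_simps)
    ultimately show "0 < (\<gamma> i - \<epsilon> - \<gamma> k) * (\<gamma> i + \<epsilon> - \<gamma> k)" by linarith
  qed
  finally have pos: "0 < (\<Prod>k\<in>{..<n}-{i}. \<gamma> i - \<epsilon> - \<gamma> k) * (\<Prod>k\<in>{..<n}-{i}. \<gamma> i + \<epsilon> - \<gamma> k)" .
  have "poly (poly_of_roots n \<gamma>) (\<gamma> i - \<epsilon>) * poly (poly_of_roots n \<gamma>) (\<gamma> i + \<epsilon>)
     = - (\<epsilon> * \<epsilon>) * ((\<Prod>k\<in>{..<n}-{i}. \<gamma> i - \<epsilon> - \<gamma> k) * (\<Prod>k\<in>{..<n}-{i}. \<gamma> i + \<epsilon> - \<gamma> k))"
    unfolding r by (simp add: algebra_simps)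
  also have "\<dots> < 0" using pos e by (simp add: mult_pos_pos)
  finally show ?thesis .
qed


lemma perturb_monic:
  fixes G :: "real poly"
  assumes degG: "degree G < n"
  shows "degree (poly_of_roots n \<gamma> - smult t G) = n \<and> lead_coeff (poly_of_roots n \<gamma> - smult t G) = 1"
proof -
  have m: "degree (poly_of_roots n \<gamma>) = n" "coeff (poly_of_roots n \<gamma>) n = 1"
    using poly_of_roots_monic[of n \<gamma>] by auto
  have c: "coeff (poly_of_roots n \<gamma> - smult t G) n = 1" using m degG by (simp add: coeff_eq_0)
  have "degree (poly_of_roots n \<gamma> - smult t G) \<le> n"
    by (rule degree_le) (use m degG in \<open>auto simp: coeff_eq_0\<close>)
  moreover have "n \<le> degree (poly_of_roots n \<gamma> - smult t G)" by (rule le_degree) (use c in simp)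
  ultimately show ?thesis using c by simp
qed

lemma perturb_roots:
  fixes \<gamma> :: "nat \<Rightarrow> real" and G :: "real poly"
  assumes mono: "\<forall>i j. i < j \<and> j < n \<longrightarrow> \<gamma> i < \<gamma> j"
    and zero: "\<forall>i. n \<le> i \<longrightarrow> \<gamma> i = 0"
    and degG: "degree G < n"
    and gap: "\<forall>i j. i < j \<and> j < n \<longrightarrow> 2 * \<delta> < \<gamma> j - \<gamma> i"
    and e: "0 < \<epsilon>" "\<epsilon> \<le> \<delta>"
  shows "\<forall>\<^sub>F t in at 0. \<forall>i<n.
     poly (poly_of_roots n \<gamma> - smult t G) (sorted_roots n (poly_of_roots n \<gamma> - smult t G) i) = 0
     \<and> \<bar>sorted_roots n (poly_of_roots n \<gamma> - smult t G) i - \<gamma> i\<bar> < \<epsilon>"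
proof -
  define F where "F = poly_of_roots n \<gamma>"
  have sep: "\<forall>k<n. k \<noteq> i \<longrightarrow> \<epsilon> < \<bar>\<gamma> i - \<gamma> k\<bar>" if "i < n" for i
  proof (intro allI impI)
    fix k assume k: "k < n" "k \<noteq> i"
    show "\<epsilon> < \<bar>\<gamma> i - \<gamma> k\<bar>"
    proof (cases "i < k")
      case True then show ?thesis using gap k e by force
    next
      case False then have "k < i" using k by auto
      then show ?thesis using gap that e by force
    qed
  qed
  have sc: "poly F (\<gamma> i - \<epsilon>) * poly F (\<gamma> i + \<epsilon>) < 0" if "i < n" for i
    unfolding F_def using sign_change[OF that e(1) sep[OF that]] .
  have ev: "\<forall>\<^sub>F t in at 0. \<forall>i\<in>{..<n}.
      poly (F - smult t G) (\<gamma> i - \<epsilon>) * poly (F - smult t G) (\<gamma> i + \<epsilon>) < 0"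
  proof (rule eventually_ball_finite, simp, intro ballI)
    fix i assume "i \<in> {..<n}"
    then have i: "i < n" by simp
    have "((\<lambda>t. (poly F (\<gamma> i - \<epsilon>) - t * poly G (\<gamma> i - \<epsilon>)) * (poly F (\<gamma> i + \<epsilon>) - t * poly G (\<gamma> i + \<epsilon>)))
        \<longlongrightarrow> (poly F (\<gamma> i - \<epsilon>) - 0 * poly G (\<gamma> i - \<epsilon>)) * (poly F (\<gamma> i + \<epsilon>) - 0 * poly G (\<gamma> i + \<epsilon>))) (at 0)"
      by (intro tendsto_intros)
    then have "\<forall>\<^sub>F t in at 0. (poly F (\<gamma> i - \<epsilon>) - t * poly G (\<gamma> i - \<epsilon>)) * (poly F (\<gamma> i + \<epsilon>) - t * poly G (\<gamma> i + \<epsilon>)) < 0"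
      using sc[OF i] by (intro order_tendstoD(2)) auto
    then show "\<forall>\<^sub>F t in at 0. poly (F - smult t G) (\<gamma> i - \<epsilon>) * poly (F - smult t G) (\<gamma> i + \<epsilon>) < 0"
      by simp
  qed
  show ?thesis unfolding F_def[symmetric]
  proof (rule eventually_mono[OF ev])
    fix t assume h: "\<forall>i\<in>{..<n}. poly (F - smult t G) (\<gamma> i - \<epsilon>) * poly (F - smult t G) (\<gamma> i + \<epsilon>) < 0"
    define P where "P = F - smult t G"
    have ex: "\<exists>x. \<gamma> i - \<epsilon> < x \<and> x < \<gamma> i + \<epsilon> \<and> poly P x = 0" if "i < n" for i
      using poly_IVT[of "\<gamma> i - \<epsilon>" "\<gamma> i + \<epsilon>" P] h that e unfolding P_def by auto
    define r where "r i = (if i < n then SOME x. \<gamma> i - \<epsilon> < x \<and> x < \<gamma> i + \<epsilon> \<and> poly P x = 0 else 0)" for i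
    have r: "\<gamma> i - \<epsilon> < r i \<and> r i < \<gamma> i + \<epsilon> \<and> poly P (r i) = 0" if "i < n" for i
      unfolding r_def using that someI_ex[OF ex[OF that]] by simp
    have rmono: "\<forall>i j. i < j \<and> j < n \<longrightarrow> r i < r j"
    proof (intro allI impI)
      fix i j assume ij: "i < j \<and> j < n"
      then show "r i < r j" using r[of i] r[of j] gap e by force
    qed
    have rzero: "\<forall>i. n \<le> i \<longrightarrow> r i = 0" unfolding r_def by simp
    have pm: "degree P = n" "lead_coeff P = 1" using perturb_monic[OF degG, of \<gamma> t] unfolding P_def F_def by metis+
    have "sorted_roots n P = r" using sorted_roots_of_roots[OF pm rmono rzero] r by auto
    then show "\<forall>i<n. poly (F - smult t G) (sorted_roots n (F - smult t G) i) = 0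
       \<and> \<bar>sorted_roots n (F - smult t G) i - \<gamma> i\<bar> < \<epsilon>"
      using r unfolding P_def by (smt (verit))
  qed
qed


lemma root_deriv:
  fixes \<gamma> :: "nat \<Rightarrow> real" and G :: "real poly"
  assumes mono: "\<forall>i j. i < j \<and> j < n \<longrightarrow> \<gamma> i < \<gamma> j"
    and zero: "\<forall>i. n \<le> i \<longrightarrow> \<gamma> i = 0"
    and degG: "degree G < n"
    and i: "i < n"
  shows "((\<lambda>t. sorted_roots n (poly_of_roots n \<gamma> - smult t G) i) has_real_derivative
          poly G (\<gamma> i) / (\<Prod>k\<in>{..<n}-{i}. \<gamma> i - \<gamma> k)) (at 0)"
proof -
  obtain \<delta> where d: "\<delta> > 0" and gap: "\<forall>i j. i < j \<and> j < n \<longrightarrow> 2 * \<delta> < \<gamma> j - \<gamma> i"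
    using gap_exists[OF mono] by blast
  define F where "F = poly_of_roots n \<gamma>"
  define \<rho> where "\<rho> t = sorted_roots n (F - smult t G) i" for t
  have \<rho>0: "\<rho> 0 = \<gamma> i" unfolding \<rho>_def F_def using sorted_roots_eq[OF mono zero refl] by simp
  have cont: "(\<rho> \<longlongrightarrow> \<gamma> i) (at 0)"
    unfolding tendsto_iff
  proof (intro allI impI)
    fix e :: real assume e: "e > 0"
    have "min e \<delta> > 0" "min e \<delta> \<le> \<delta>" using e d by auto
    from perturb_roots[OF mono zero degG gap this]
    show "\<forall>\<^sub>F t in at 0. dist (\<rho> t) (\<gamma> i) < e"
      by (rule eventually_mono) (use i in \<open>auto simp: dist_real_def \<rho>_def F_def\<close>)
  qed
  have root: "\<forall>\<^sub>F t in at 0. poly (F - smult t G) (\<rho> t) = 0"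
    using perturb_roots[OF mono zero degG gap d order.refl] unfolding F_def \<rho>_def
    by (rule eventually_mono) (use i in auto)
  define Rp where "Rp = (\<Prod>k\<in>{..<n}-{i}. [:- \<gamma> k, 1:])"
  have Rpoly: "poly Rp x = (\<Prod>k\<in>{..<n}-{i}. x - \<gamma> k)" for x
    unfolding Rp_def by (simp add: poly_prod)
  have Fx: "poly F x = (x - \<gamma> i) * poly Rp x" for x
    unfolding F_def poly_of_roots_poly Rpoly using i by (simp add: prod.remove)
  have R0: "poly Rp (\<gamma> i) \<noteq> 0"
    unfolding Rpoly
  proof
    assume "(\<Prod>k\<in>{..<n}-{i}. \<gamma> i - \<gamma> k) = 0"
    then obtain k where "k < n" "k \<noteq> i" "\<gamma> i = \<gamma> k" by auto
    then show False using mono i by (metis less_irrefl nat_neq_iff)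
  qed
  have Rlim: "((\<lambda>t. poly Rp (\<rho> t)) \<longlongrightarrow> poly Rp (\<gamma> i)) (at 0)"
    using cont by (intro tendsto_intros)
  have Rne: "\<forall>\<^sub>F t in at 0. poly Rp (\<rho> t) \<noteq> 0"
    using tendsto_imp_eventually_ne[OF Rlim R0] .
  have lim: "((\<lambda>t. poly G (\<rho> t) / poly Rp (\<rho> t)) \<longlongrightarrow> poly G (\<gamma> i) / poly Rp (\<gamma> i)) (at 0)"
    using cont R0 by (intro tendsto_intros)
  have eq: "\<forall>\<^sub>F t in at 0. poly G (\<rho> t) / poly Rp (\<rho> t) = (\<rho> t - \<rho> 0) / (t - 0)"
  proof (rule eventually_mono[OF eventually_conj[OF eventually_conj[OF root Rne] eventually_neq_at_within[of 0 0 UNIV]]])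
    fix t assume h: "(poly (F - smult t G) (\<rho> t) = 0 \<and> poly Rp (\<rho> t) \<noteq> 0) \<and> t \<noteq> 0"
    then have "(\<rho> t - \<gamma> i) * poly Rp (\<rho> t) = t * poly G (\<rho> t)" using Fx[of "\<rho> t"] by simp
    then show "poly G (\<rho> t) / poly Rp (\<rho> t) = (\<rho> t - \<rho> 0) / (t - 0)"
      using h \<rho>0 by (simp add: field_simps)
  qed
  have "(\<rho> has_real_derivative poly G (\<gamma> i) / poly Rp (\<gamma> i)) (at 0)"
    unfolding has_field_derivative_iff using Lim_transform_eventually[OF lim eq] .
  then show ?thesis unfolding \<rho>_def F_def Rpoly .
qed

definition ffa :: "nat \<Rightarrow> real poly \<Rightarrow> nat \<Rightarrow> real" where
  "ffa n f k = (-1) ^ k * coeff f (n - k)"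

definition ffw :: "nat \<Rightarrow> nat \<Rightarrow> nat \<Rightarrow> real" where
  "ffw n i k = (fact (n - i) * fact (n - (k - i))) / (fact n * fact (n - k))"

definition ffc :: "nat \<Rightarrow> real poly \<Rightarrow> real poly \<Rightarrow> nat \<Rightarrow> real" where
  "ffc n f g k = (\<Sum>i\<le>k. ffw n i k * ffa n f i * ffa n g (k - i))"

lemma ffconv_alt: "ffconv n f g = (\<Sum>k\<le>n. monom ((-1) ^ k * ffc n f g k) (n - k))"
  by (simp add: ffconv_def ffa_def ffc_def ffw_def Let_def)

lemma coeff_sum_monom_rev:
  "coeff (\<Sum>k\<le>n. monom (d k) (n - k)) m = (if m \<le> n then d (n - m) else 0)"
proof -
  have "coeff (\<Sum>k\<le>n. monom (d k) (n - k)) m = (\<Sum>k\<le>n. if n - k = m then d k else 0)"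
    by (simp add: coeff_sum coeff_monom)
  also have "\<dots> = (\<Sum>k\<le>n. if k = n - m \<and> m \<le> n then d k else 0)"
    by (rule sum.cong) auto
  also have "\<dots> = (if m \<le> n then d (n - m) else 0)"
    by (cases "m \<le> n") (simp_all add: sum.delta)
  finally show ?thesis .
qed

lemma coeff_ffconv:
  "coeff (ffconv n f g) m = (if m \<le> n then (-1) ^ (n - m) * ffc n f g (n - m) else 0)"
  unfolding ffconv_alt coeff_sum_monom_rev by simp

lemma ffconv_sum:
  assumes "finite A"
  shows "ffconv n (\<Sum>j\<in>A. smult (s j) (q j)) g = (\<Sum>j\<in>A. smult (s j) (ffconv n (q j) g))"
proof (rule poly_eqI)
  fix m
  have a: "ffa n (\<Sum>j\<in>A. smult (s j) (q j)) i = (\<Sum>j\<in>A. s j * ffa n (q j) i)" for i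
    unfolding ffa_def by (simp add: coeff_sum sum_distrib_left mult.left_commute)
  have c: "ffc n (\<Sum>j\<in>A. smult (s j) (q j)) g k = (\<Sum>j\<in>A. s j * ffc n (q j) g k)" for k
    unfolding ffc_def a by (simp add: sum_distrib_left sum_distrib_right mult.left_commute mult.commute sum.swap[of _ A])
  show "coeff (ffconv n (\<Sum>j\<in>A. smult (s j) (q j)) g) m = coeff (\<Sum>j\<in>A. smult (s j) (ffconv n (q j) g)) m"
    by (simp only: coeff_sum coeff_ffconv c coeff_smult) (simp add: sum_distrib_left mult.left_commute)
qed

lemma ffconv_diff:
  shows "ffconv n (f - smult t q) g = ffconv n f g - smult t (ffconv n q g)"
proof (rule poly_eqI)
  fix m
  have a: "ffa n (f - smult t q) i = ffa n f i - t * ffa n q i" for i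
    unfolding ffa_def by (simp add: algebra_simps)
  have c: "ffc n (f - smult t q) g k = ffc n f g k - t * ffc n q g k" for k
    unfolding ffc_def a by (simp add: algebra_simps sum_subtractf sum_distrib_left)
  show "coeff (ffconv n (f - smult t q) g) m = coeff (ffconv n f g - smult t (ffconv n q g)) m"
    by (simp only: coeff_ffconv c coeff_diff coeff_smult) (simp add: algebra_simps)
qed

lemma fact_step: "j < n \<Longrightarrow> (fact (n - j) :: real) = real (n - j) * fact (n - Suc j)"
proof -
  assume "j < n"
  then have "n - j = Suc (n - Suc j)" by simp
  then show ?thesis by (simp only: fact_Suc)
qed

lemma ffc_pderiv_Suc:
  assumes m: "m < n"
  shows "ffc n (pderiv f) g (Suc m) = - real (n - m) * ffc n f g m + ffw n 0 (Suc m) * ffa n (pderiv f) 0 * ffa n g (Suc m)"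
proof -
  have t: "ffw n (Suc i) (Suc m) * ffa n (pderiv f) (Suc i) * ffa n g (Suc m - Suc i)
        = - real (n - m) * (ffw n i m * ffa n f i * ffa n g (m - i))" if i: "i \<le> m" for i
  proof -
    have i2: "i < n" using i m by simp
    have e1: "ffa n (pderiv f) (Suc i) = - real (n - i) * ffa n f i"
    proof -
      have "Suc (n - Suc i) = n - i" using i2 by simp
      then show ?thesis unfolding ffa_def coeff_pderiv using i2 by (simp add: of_nat_diff algebra_simps)
    qed
    have w: "ffw n i m = real (n-i) * fact (n-Suc i) * fact (n-(m-i)) / (fact n * (real (n-m) * fact (n - Suc m)))"
      unfolding ffw_def fact_step[OF i2] fact_step[OF m] by simp
    have nm: "real (n - m) \<noteq> 0" using m by simp
    have "ffw n (Suc i) (Suc m) * real (n - i) = real (n - m) * ffw n i m"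
      unfolding w unfolding ffw_def using nm by (simp add: field_simps)
    then show ?thesis unfolding e1 by (simp add: algebra_simps)
  qed
  have "ffc n (pderiv f) g (Suc m) = ffw n 0 (Suc m) * ffa n (pderiv f) 0 * ffa n g (Suc m)
      + (\<Sum>i\<le>m. ffw n (Suc i) (Suc m) * ffa n (pderiv f) (Suc i) * ffa n g (Suc m - Suc i))"
    unfolding ffc_def by (subst sum.atMost_Suc_shift) simp
  also have "\<dots> = ffw n 0 (Suc m) * ffa n (pderiv f) 0 * ffa n g (Suc m)
      + (\<Sum>i\<le>m. - real (n - m) * (ffw n i m * ffa n f i * ffa n g (m - i)))"
    using t by (intro arg_cong2[where f="(+)"] sum.cong) auto
  finally show ?thesis unfolding ffc_def by (simp add: sum_distrib_left)
qed

lemma ffconv_pderiv: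
  fixes f g :: "real poly"
  assumes d: "degree f \<le> n"
  shows "ffconv n (pderiv f) g = pderiv (ffconv n f g)"
proof (rule poly_eqI)
  fix m
  have a0: "ffa n (pderiv f) 0 = 0" unfolding ffa_def coeff_pderiv using d by (simp add: coeff_eq_0)
  have c0: "ffc n (pderiv f) g 0 = 0" unfolding ffc_def using a0 by simp
  show "coeff (ffconv n (pderiv f) g) m = coeff (pderiv (ffconv n f g)) m"
  proof (cases "m < n")
    case True
    have e: "n - m = Suc (n - Suc m)" using True by simp
    have "n - Suc m < n" using True by simp
    have s: "ffc n (pderiv f) g (Suc (n - Suc m)) = - real (Suc m) * ffc n f g (n - Suc m)"
      using ffc_pderiv_Suc[OF \<open>n - Suc m < n\<close>, of f g] a0 True by (simp add: of_nat_diff)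
    have "coeff (ffconv n (pderiv f) g) m = (-1) ^ (Suc (n - Suc m)) * ffc n (pderiv f) g (Suc (n - Suc m))"
      unfolding coeff_ffconv e using True by simp
    also have "\<dots> = real (Suc m) * ((-1) ^ (n - Suc m) * ffc n f g (n - Suc m))"
      unfolding s by (simp add: algebra_simps)
    also have "\<dots> = coeff (pderiv (ffconv n f g)) m"
      unfolding coeff_pderiv coeff_ffconv using True by simp
    finally show ?thesis .
  next
    case False
    then show ?thesis unfolding coeff_ffconv coeff_pderiv using c0 by auto
  qed
qed

lemma smult_sum_right: "smult c (\<Sum>j\<in>A. f j) = (\<Sum>j\<in>A. smult c (f j))"
  by (induction A rule: infinite_finite_induct) (auto simp: smult_add_right)

lemma pderiv_sum': "pderiv (\<Sum>j\<in>A. f j) = (\<Sum>j\<in>A. pderiv (f j))"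
  using higher_pderiv_sum[of 1 f A] by simp

lemma pderiv_lin: "pderiv [:- a, 1:] = (1 :: real poly)"
  by (simp add: pderiv_pCons)

lemma pderiv_prod_lin:
  "pderiv (\<Prod>k\<in>A. [:- \<alpha> k, 1:]) = (\<Sum>j\<in>A. \<Prod>k\<in>A - {j}. [:- (\<alpha> k :: real), 1:])"
  by (simp add: pderiv_prod pderiv_lin)

lemma score_eval:
  fixes \<gamma> :: "nat \<Rightarrow> real"
  assumes inj: "\<forall>i j. i < j \<and> j < n \<longrightarrow> \<gamma> i \<noteq> \<gamma> j" and i: "i < n"
  shows "poly (pderiv (pderiv (poly_of_roots n \<gamma>))) (\<gamma> i) / 2 / (\<Prod>k\<in>{..<n}-{i}. \<gamma> i - \<gamma> k)
         = score n \<gamma> i"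
proof -
  define S where "S = {..<n} - {i}"
  define R where "R = (\<Prod>k\<in>S. [:- \<gamma> k, 1:])"
  have F: "poly_of_roots n \<gamma> = [:- \<gamma> i, 1:] * R"
    unfolding poly_of_roots_def R_def S_def using i by (simp add: prod.remove)
  have d1: "pderiv (poly_of_roots n \<gamma>) = [:- \<gamma> i, 1:] * pderiv R + R"
    unfolding F by (simp only: pderiv_mult pderiv_lin mult_1_right)
  have d2: "pderiv (pderiv (poly_of_roots n \<gamma>)) = [:- \<gamma> i, 1:] * pderiv (pderiv R) + pderiv R + pderiv R"
    unfolding d1 by (simp only: pderiv_add pderiv_mult pderiv_lin mult_1_right)
  have ne: "\<gamma> i - \<gamma> k \<noteq> 0" if "k \<in> S" for k
    using that inj i unfolding S_def by (metis DiffE insertI1 lessThan_iff linorder_neqE_nat eq_iff_diff_eq_0)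
  have P0: "(\<Prod>k\<in>S. \<gamma> i - \<gamma> k) \<noteq> 0" using ne by (simp add: S_def prod_zero_iff)
  have "poly (pderiv R) (\<gamma> i) = (\<Sum>j\<in>S. \<Prod>k\<in>S - {j}. \<gamma> i - \<gamma> k)"
    unfolding R_def pderiv_prod_lin by (simp add: poly_sum poly_prod)
  also have "\<dots> = (\<Sum>j\<in>S. (\<Prod>k\<in>S. \<gamma> i - \<gamma> k) / (\<gamma> i - \<gamma> j))"
  proof (rule sum.cong[OF refl])
    fix j assume j: "j \<in> S"
    have "(\<Prod>k\<in>S. \<gamma> i - \<gamma> k) = (\<gamma> i - \<gamma> j) * (\<Prod>k\<in>S - {j}. \<gamma> i - \<gamma> k)"
      using j by (simp add: S_def prod.remove)
    then show "(\<Prod>k\<in>S - {j}. \<gamma> i - \<gamma> k) = (\<Prod>k\<in>S. \<gamma> i - \<gamma> k) / (\<gamma> i - \<gamma> j)"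
      using ne[OF j] by (simp add: field_simps)
  qed
  finally have "poly (pderiv R) (\<gamma> i) = (\<Prod>k\<in>S. \<gamma> i - \<gamma> k) * score n \<gamma> i"
    unfolding score_def S_def by (simp add: sum_distrib_left)
  then show ?thesis unfolding d2 S_def[symmetric] using P0 by simp
qed

lemma score_poly_sum:
  fixes \<alpha> :: "nat \<Rightarrow> real"
  assumes inj: "\<forall>i j. i < j \<and> j < n \<longrightarrow> \<alpha> i \<noteq> \<alpha> j"
  shows "(\<Sum>j<n. smult (score n \<alpha> j) (\<Prod>k\<in>{..<n}-{j}. [:- \<alpha> k, 1:]))
         = smult (1/2) (pderiv (pderiv (poly_of_roots n \<alpha>)))"
proof -
  define S where "S j = {k \<in> {..<n}. k \<noteq> j}" for j
  have Sd: "{..<n} - {j} = S j" for j unfolding S_def by auto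
  define q where "q j = (\<Prod>k\<in>S j. [:- \<alpha> k, 1:])" for j
  define qq where "qq j k = (\<Prod>l\<in>S j - {k}. [:- \<alpha> l, 1:])" for j k
  have ne: "\<alpha> j - \<alpha> k \<noteq> 0" if "k \<in> S j" "j < n" for j k
    using that inj unfolding S_def by (metis (mono_tags) mem_Collect_eq lessThan_iff linorder_neqE_nat eq_iff_diff_eq_0)
  have key: "qq j k = smult (1 / (\<alpha> j - \<alpha> k)) (q j) - smult (1 / (\<alpha> j - \<alpha> k)) (q k)"
    if jk: "k \<in> S j" "j < n" for j k
  proof -
    have qj: "q j = [:- \<alpha> k, 1:] * qq j k" unfolding q_def qq_def using jk
      by (simp add: S_def prod.remove)
    have "S k - {j} = S j - {k}" unfolding S_def by auto
    moreover have "j \<in> S k" using jk unfolding S_def by auto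
    ultimately have qk: "q k = [:- \<alpha> j, 1:] * qq j k" unfolding q_def qq_def
      by (simp add: S_def prod.remove)
    from qj qk have "q j - q k = ([:- \<alpha> k, 1:] - [:- \<alpha> j, 1:]) * qq j k"
      by (simp only: left_diff_distrib)
    also have "[:- \<alpha> k, 1:] - [:- \<alpha> j, 1:] = [:\<alpha> j - \<alpha> k:]" by simp
    also have "[:\<alpha> j - \<alpha> k:] * qq j k = smult (\<alpha> j - \<alpha> k) (qq j k)" by simp
    finally have "q j - q k = smult (\<alpha> j - \<alpha> k) (qq j k)" .
    then show ?thesis using ne[OF jk] by (simp add: smult_diff_right[symmetric])
  qed
  have d1: "pderiv (poly_of_roots n \<alpha>) = (\<Sum>j<n. q j)"
    unfolding poly_of_roots_def pderiv_prod_lin q_def Sd ..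
  have d2: "pderiv (pderiv (poly_of_roots n \<alpha>)) = (\<Sum>j<n. \<Sum>k\<in>S j. qq j k)"
    unfolding d1 pderiv_sum' q_def pderiv_prod_lin qq_def ..
  also have "\<dots> = (\<Sum>j<n. \<Sum>k\<in>S j. smult (1 / (\<alpha> j - \<alpha> k)) (q j))
                - (\<Sum>j<n. \<Sum>k\<in>S j. smult (1 / (\<alpha> j - \<alpha> k)) (q k))"
    by (simp add: key sum_subtractf)
  also have "(\<Sum>j<n. \<Sum>k\<in>S j. smult (1 / (\<alpha> j - \<alpha> k)) (q j)) = (\<Sum>j<n. smult (score n \<alpha> j) (q j))"
    unfolding score_def Sd smult_sum ..
  also have "(\<Sum>j<n. \<Sum>k\<in>S j. smult (1 / (\<alpha> j - \<alpha> k)) (q k))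
           = (\<Sum>k<n. \<Sum>j\<in>S k. smult (1 / (\<alpha> j - \<alpha> k)) (q k))"
    unfolding S_def by (subst sum.swap_restrict) (auto intro!: sum.cong)
  also have "\<dots> = - (\<Sum>k<n. smult (score n \<alpha> k) (q k))"
    unfolding score_def Sd smult_sum sum_negf[symmetric]
  proof (intro sum.cong refl)
    fix x xa
    have "1 / (\<alpha> xa - \<alpha> x) = - (1 / (\<alpha> x - \<alpha> xa))" by (simp add: divide_simps)
    then show "smult (1 / (\<alpha> xa - \<alpha> x)) (q x) = - smult (1 / (\<alpha> x - \<alpha> xa)) (q x)" by simp
  qed
  finally have "pderiv (pderiv (poly_of_roots n \<alpha>)) = (\<Sum>j<n. smult (score n \<alpha> j) (q j)) + (\<Sum>j<n. smult (score n \<alpha> j) (q j))"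
    by simp
  then have "smult (1/2) (pderiv (pderiv (poly_of_roots n \<alpha>))) = smult (1/2 + 1/2) (\<Sum>j<n. smult (score n \<alpha> j) (q j))"
    by (simp only: smult_add_right smult_add_left)
  then show ?thesis unfolding q_def Sd by simp
qed

lemma ffconv_smult: "ffconv n (smult c f) g = smult c (ffconv n f g)"
  using ffconv_sum[of "{0::nat}" n "\<lambda>_. c" "\<lambda>_. f" g] by simp

lemma perturb_poly:
  fixes h :: "nat \<Rightarrow> real"
  assumes j: "j < n"
  shows "poly_of_roots n (h(j := h j + t)) = poly_of_roots n h - smult t (\<Prod>k\<in>{..<n}-{j}. [:- h k, 1:])"
proof -
  define q where "q = (\<Prod>k\<in>{..<n}-{j}. [:- h k, 1:])"
  have "poly_of_roots n (h(j := h j + t)) = [:- (h j + t), 1:] * (\<Prod>k\<in>{..<n}-{j}. [:- (h(j := h j + t)) k, 1:])"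
    unfolding poly_of_roots_def using j by (simp add: prod.remove)
  also have "(\<Prod>k\<in>{..<n}-{j}. [:- (h(j := h j + t)) k, 1:]) = q"
    unfolding q_def by (rule prod.cong) auto
  also have "[:- (h j + t), 1:] = [:- h j, 1:] - [:t:]" by simp
  also have "([:- h j, 1:] - [:t:]) * q = [:- h j, 1:] * q - smult t q" by (simp only: left_diff_distrib) simp
  also have "[:- h j, 1:] * q = poly_of_roots n h"
    unfolding poly_of_roots_def q_def using j by (simp add: prod.remove)
  finally show ?thesis unfolding q_def .
qed

lemma degree_q: "j < n \<Longrightarrow> degree (\<Prod>k\<in>{..<n}-{j}. [:- (h k :: real), 1:]) \<le> n - 1"
if "j < n" proof -
  have "degree (\<Prod>k\<in>{..<n}-{j}. [:- (h k :: real), 1:]) \<le> (\<Sum>k\<in>{..<n}-{j}. 1)"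
    using degree_prod_sum_le[of "{..<n}-{j}" "\<lambda>k. [:- h k, 1:]"] by (simp add: o_def)
  also have "\<dots> \<le> n - 1" using that by auto
  finally show ?thesis .
qed

lemma degree_ffconv_lt:
  assumes n: "n \<ge> 1" and d: "degree q < n"
  shows "degree (ffconv n q g) < n"
proof -
  have "degree (ffconv n q g) \<le> n - 1"
  proof (rule degree_le, intro allI impI)
    fix m assume m: "n - 1 < m"
    show "coeff (ffconv n q g) m = 0"
    proof (cases "m = n")
      case True
      have "ffa n q 0 = 0" unfolding ffa_def using d by (simp add: coeff_eq_0)
      then show ?thesis unfolding coeff_ffconv ffc_def using True by simp
    next
      case False then show ?thesis unfolding coeff_ffconv using m by auto
    qed
  qed
  then show ?thesis using n by linarith
qed

lemma Ederiv:
  fixes h \<gamma> :: "nat \<Rightarrow> real"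
  assumes monoh: "\<forall>i j. i < j \<and> j < n \<longrightarrow> h i < h j"
    and mono: "\<forall>i j. i < j \<and> j < n \<longrightarrow> \<gamma> i < \<gamma> j"
    and zero: "\<forall>i. n \<le> i \<longrightarrow> \<gamma> i = 0"
    and conv: "ffconv n (poly_of_roots n h) (poly_of_roots n h) = poly_of_roots n \<gamma>"
    and n: "n \<ge> 1" and i: "i < n"
  shows "(\<Sum>j<n. deriv (\<lambda>t. Omega n (h(j := h j + t)) h i) 0 * score n h j) = score n \<gamma> i"
proof -
  define f where "f = poly_of_roots n h"
  define q where "q j = (\<Prod>k\<in>{..<n}-{j}. [:- h k, 1:])" for j
  define G where "G j = ffconv n (q j) f" for j
  define P where "P = (\<Prod>k\<in>{..<n}-{i}. \<gamma> i - \<gamma> k)"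
  have dG: "degree (G j) < n" if "j < n" for j
    unfolding G_def q_def by (rule degree_ffconv_lt[OF n]) (use degree_q[where n=n and j=j and h=h] n that in linarith)
  have dj: "deriv (\<lambda>t. Omega n (h(j := h j + t)) h i) 0 = poly (G j) (\<gamma> i) / P" if j: "j < n" for j
  proof -
    have "Omega n (h(j := h j + t)) h = sorted_roots n (poly_of_roots n \<gamma> - smult t (G j))" for t
      unfolding Omega_def perturb_poly[OF j] ffconv_diff G_def q_def f_def conv ..
    then have e: "(\<lambda>t. Omega n (h(j := h j + t)) h i) = (\<lambda>t. sorted_roots n (poly_of_roots n \<gamma> - smult t (G j)) i)"
      by simp
    show ?thesis unfolding e P_def by (rule DERIV_imp_deriv, rule root_deriv[OF mono zero dG[OF j] i])
  qed
  have injh: "\<forall>i j. i < j \<and> j < n \<longrightarrow> h i \<noteq> h j" using monoh by force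
  have injg: "\<forall>i j. i < j \<and> j < n \<longrightarrow> \<gamma> i \<noteq> \<gamma> j" using mono by force
  have "(\<Sum>j<n. deriv (\<lambda>t. Omega n (h(j := h j + t)) h i) 0 * score n h j)
      = (\<Sum>j<n. score n h j * poly (G j) (\<gamma> i)) / P"
    using dj by (simp add: sum_divide_distrib mult.commute)
  also have "(\<Sum>j<n. score n h j * poly (G j) (\<gamma> i)) = poly (\<Sum>j<n. smult (score n h j) (G j)) (\<gamma> i)"
    by (simp add: poly_sum)
  also have "(\<Sum>j<n. smult (score n h j) (G j)) = ffconv n (\<Sum>j<n. smult (score n h j) (q j)) f"
    unfolding G_def by (simp add: ffconv_sum)
  also have "(\<Sum>j<n. smult (score n h j) (q j)) = smult (1/2) (pderiv (pderiv f))"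
    unfolding q_def f_def by (rule score_poly_sum[OF injh])
  also have "ffconv n (smult (1/2) (pderiv (pderiv f))) f = smult (1/2) (pderiv (pderiv (poly_of_roots n \<gamma>)))"
  proof -
    have df: "degree f \<le> n" unfolding f_def using poly_of_roots_monic[of n h] by simp
    have df': "degree (pderiv f) \<le> n" using degree_pderiv[of f] df by simp
    show ?thesis unfolding ffconv_smult ffconv_pderiv[OF df'] ffconv_pderiv[OF df]
      using conv f_def by simp
  qed
  finally have eq: "(\<Sum>j<n. deriv (\<lambda>t. Omega n (h(j := h j + t)) h i) 0 * score n h j)
     = poly (smult (1/2) (pderiv (pderiv (poly_of_roots n \<gamma>)))) (\<gamma> i) / P" .
  show ?thesis unfolding eq using score_eval[OF injg i] unfolding P_def by simp
qed

lemma herm_coeff_top: "(\<forall>k>n. coeff (hermite n) k = 0) \<and> coeff (hermite n) n = 1"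
proof (induction n rule: hermite.induct)
  case 1 then show ?case by simp
next
  case 2 then show ?case by (simp add: coeff_pCons split: nat.split)
next
  case (3 n)
  have c: "coeff (hermite (Suc (Suc n))) k = (case k of 0 \<Rightarrow> 0 | Suc k' \<Rightarrow> coeff (hermite (Suc n)) k') - real (Suc n) * coeff (hermite n) k" for k
    by (simp add: coeff_pCons split: nat.split)
  show ?case
  proof
    show "\<forall>k>Suc (Suc n). coeff (hermite (Suc (Suc n))) k = 0"
      using 3 unfolding c by (auto split: nat.split)
    show "coeff (hermite (Suc (Suc n))) (Suc (Suc n)) = 1" using 3 unfolding c by simp
  qed
qed

lemma herm_monic: "degree (hermite n) = n \<and> lead_coeff (hermite n) = 1"
proof -
  have "degree (hermite n) \<le> n" using herm_coeff_top[of n] by (intro degree_le) auto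
  moreover have "n \<le> degree (hermite n)" using herm_coeff_top[of n] by (intro le_degree) auto
  ultimately show ?thesis using herm_coeff_top[of n] by simp
qed

lemma herm_parity: "poly (hermite n) (- x) = (-1) ^ n * poly (hermite n) x"
  by (induction n rule: hermite.induct) (auto simp: algebra_simps)

lemma prod_sign:
  fixes y :: "nat \<Rightarrow> real"
  assumes "\<forall>l<m. (l < k \<longrightarrow> y l < x) \<and> (k \<le> l \<longrightarrow> x < y l)"
  shows "(-1) ^ (m - k) * (\<Prod>l<m. x - y l) > 0"
  using assms
proof (induction m)
  case 0 then show ?case by simp
next
  case (Suc m)
  have IH: "(-1) ^ (m - k) * (\<Prod>l<m. x - y l) > 0" using Suc by auto
  show ?case
  proof (cases "m < k")
    case True
    then have "x - y m > 0" "Suc m - k = m - k" using Suc.prems by auto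
    then show ?thesis using IH by (simp add: mult_pos_pos mult.assoc[symmetric])
  next
    case False
    then have "x - y m < 0" "Suc m - k = Suc (m - k)" using Suc.prems by auto
    then show ?thesis using IH by (simp add: mult_neg_neg mult.assoc[symmetric] mult_less_0_iff)
  qed
qed

lemma herm_large: "\<exists>b. \<forall>x\<ge>b. poly (hermite n) x > 0"
proof -
  obtain b where "\<forall>x\<ge>b. poly (hermite n) x \<ge> lead_coeff (hermite n)"
    using poly_pinfty_gt_lc[of "hermite n"] herm_monic[of n] by auto
  then show ?thesis using herm_monic[of n] by (intro exI[of _ b]) force
qed


lemma herm_interlace:
  "\<exists>y. (\<forall>i j. i < j \<and> j < Suc n \<longrightarrow> y i < y j) \<and> hermite (Suc n) = poly_of_roots (Suc n) y
       \<and> (\<forall>k\<le>n. (-1) ^ (n - k) * poly (hermite n) (y k) > 0)"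
proof (induction n)
  case 0
  have "hermite (Suc 0) = poly_of_roots (Suc 0) (\<lambda>_. 0)" by (simp add: poly_of_roots_def)
  then show ?case by (intro exI[of _ "\<lambda>_. 0"]) auto
next
  case (Suc n)
  then obtain y where ymono: "\<forall>i j. i < j \<and> j < Suc n \<longrightarrow> y i < y j"
    and yroots: "hermite (Suc n) = poly_of_roots (Suc n) y"
    and ysign: "\<forall>k\<le>n. (-1) ^ (n - k) * poly (hermite n) (y k) > 0" by blast
  define H where "H = hermite (Suc (Suc n))"
  have Hy: "poly H (y k) = - real (Suc n) * poly (hermite n) (y k)" if "k \<le> n" for k
  proof -
    have "poly (hermite (Suc n)) (y k) = 0" unfolding yroots poly_of_roots_poly using that
      by (intro prod_zero) auto
    then show ?thesis unfolding H_def by (simp add: algebra_simps)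
  qed
  obtain b where b: "\<forall>x\<ge>b. poly H x > 0" using herm_large[of "Suc (Suc n)"] unfolding H_def by blast
  define B where "B = max b (max (y n + 1) (1 - y 0))"
  have B: "B \<ge> b" "B > y n" "- B < y 0" unfolding B_def by auto
  define p where "p k = (if k = 0 then - B else if k \<le> Suc n then y (k - 1) else B + real k)" for k
  have pstep: "p k < p (Suc k)" for k
  proof -
    consider "k = 0" | "1 \<le> k \<and> k \<le> n" | "k = Suc n" | "k > Suc n" by linarith
    then show ?thesis
    proof cases
      case 1 then show ?thesis using B unfolding p_def by simp
    next
      case 2 then show ?thesis unfolding p_def using ymono by simp
    next
      case 3 then show ?thesis unfolding p_def using B by simp
    next
      case 4 then show ?thesis unfolding p_def by simp
    qed
  qed
  have pmono: "i < j \<Longrightarrow> p i < p j" for i j using lift_Suc_mono_less[of p, OF pstep] by blast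
  have pmono': "i \<le> j \<Longrightarrow> p i \<le> p j" for i j using pmono[of i j] by (cases "i = j") auto
  have psign: "(-1) ^ (Suc (Suc n) - k) * poly H (p k) > 0" if kk: "k \<le> Suc (Suc n)" for k
  proof -
    have "k = 0 \<or> (1 \<le> k \<and> k \<le> Suc n) \<or> k = Suc (Suc n)" using kk by linarith
    then consider "k = 0" | "1 \<le> k \<and> k \<le> Suc n" | "k = Suc (Suc n)" by blast
    then show ?thesis
    proof cases
      case 1
      have "poly H (p k) = (-1) ^ Suc (Suc n) * poly H B"
        unfolding 1 p_def H_def using herm_parity[of "Suc (Suc n)" B] by simp
      moreover have "poly H B > 0" using b B by simp
      ultimately show ?thesis unfolding 1 by (simp add: mult.assoc[symmetric] power_add[symmetric])
    next
      case 2
      then obtain k' where k': "k = Suc k'" "k' \<le> n" by (cases k) auto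
      have "p k = y k'" unfolding p_def using k' by simp
      moreover have "Suc (Suc n) - k = Suc (n - k')" using k' by simp
      moreover have "(-1) ^ Suc (n - k') * (- real (Suc n) * poly (hermite n) (y k'))
          = real (Suc n) * ((-1) ^ (n - k') * poly (hermite n) (y k'))" by (simp add: algebra_simps)
      moreover have "real (Suc n) * ((-1) ^ (n - k') * poly (hermite n) (y k')) > 0"
        by (rule mult_pos_pos) (use ysign k'(2) in auto)
      ultimately show ?thesis using Hy[OF k'(2)] by simp
    next
      case 3
      then show ?thesis using b B unfolding p_def by simp
    qed
  qed
  have ex: "\<exists>x. p k < x \<and> x < p (Suc k) \<and> poly H x = 0" if "k \<le> Suc n" for k
  proof -
    have s1: "(-1) ^ (Suc (Suc n) - k) * poly H (p k) > 0" using psign that by simp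
    have s2: "(-1) ^ (Suc (Suc n) - Suc k) * poly H (p (Suc k)) > 0" using psign[of "Suc k"] that by simp
    have e: "Suc (Suc n) - k = Suc (Suc (Suc n) - Suc k)" using that by simp
    have "poly H (p k) * poly H (p (Suc k)) < 0"
    proof -
      define a where "a = (Suc (Suc n) - Suc k)"
      have s1': "- ((-1) ^ a * poly H (p k)) > 0" using s1 unfolding e a_def[symmetric] by simp
      have "(- ((-1) ^ a * poly H (p k))) * ((-1) ^ a * poly H (p (Suc k))) > 0"
        using s1' s2 unfolding a_def by (rule mult_pos_pos)
      moreover have "(- ((-1) ^ a * poly H (p k))) * ((-1) ^ a * poly H (p (Suc k)))
          = - (((-1) ^ a) * ((-1) ^ a)) * (poly H (p k) * poly H (p (Suc k)))" by (simp only: mult_ac mult_minus_left mult_minus_right)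
      moreover have "((-1::real) ^ a) * ((-1) ^ a) = 1" by (simp add: power_add[symmetric] mult_2[symmetric] power_mult)
      ultimately have "- (poly H (p k) * poly H (p (Suc k))) > 0" by (simp only: mult_1 mult_minus_left)
      then show ?thesis by linarith
    qed
    then show ?thesis using poly_IVT[OF pstep[of k]] by blast
  qed
  define z where "z k = (SOME x. p k < x \<and> x < p (Suc k) \<and> poly H x = 0)" for k
  have z: "p k < z k \<and> z k < p (Suc k) \<and> poly H (z k) = 0" if "k \<le> Suc n" for k
    unfolding z_def using someI_ex[OF ex[OF that]] .
  have zmono: "\<forall>i j. i < j \<and> j < Suc (Suc n) \<longrightarrow> z i < z j"
  proof (intro allI impI)
    fix i j assume ij: "i < j \<and> j < Suc (Suc n)"
    then have "z i < p (Suc i)" "p j < z j" using z by auto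
    moreover have "p (Suc i) \<le> p j" using ij by (intro pmono') auto
    ultimately show "z i < z j" by linarith
  qed
  have Hz: "H = poly_of_roots (Suc (Suc n)) z"
  proof (rule roots_to_prod)
    show "degree H = Suc (Suc n)" "lead_coeff H = 1" unfolding H_def using herm_monic[of "Suc (Suc n)"] by metis+
    show "\<forall>i j. i < j \<and> j < Suc (Suc n) \<longrightarrow> z i \<noteq> z j" using zmono by force
    show "\<forall>i<Suc (Suc n). poly H (z i) = 0" using z by auto
  qed
  have zsign: "(-1) ^ (Suc n - k) * poly (hermite (Suc n)) (z k) > 0" if "k \<le> Suc n" for k
    unfolding yroots poly_of_roots_poly
  proof (rule prod_sign, intro allI impI conjI)
    fix l assume l: "l < Suc n"
    show "l < k \<Longrightarrow> y l < z k"
    proof -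
      assume "l < k"
      then have "p (Suc l) \<le> p k" by (intro pmono') auto
      moreover have "p (Suc l) = y l" unfolding p_def using l by simp
      ultimately show ?thesis using z[OF that] by linarith
    qed
    show "k \<le> l \<Longrightarrow> z k < y l"
    proof -
      assume "k \<le> l"
      then have "p (Suc k) \<le> p (Suc l)" by (intro pmono') auto
      moreover have "p (Suc l) = y l" unfolding p_def using l by simp
      ultimately show ?thesis using z[OF that] by linarith
    qed
  qed
  show ?case using zmono Hz zsign unfolding H_def by blast
qed

lemma herm_coeff_rec:
  "coeff (hermite (Suc (Suc n))) k = (case k of 0 \<Rightarrow> 0 | Suc k' \<Rightarrow> coeff (hermite (Suc n)) k') - real (Suc n) * coeff (hermite n) k"
  by (simp add: coeff_pCons split: nat.split)

lemma herm_coeff_odd: "odd (n - k) \<or> n < k \<Longrightarrow> coeff (hermite n) k = 0"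
proof (induction n arbitrary: k rule: hermite.induct)
  case 1 then show ?case by (cases k) auto
next
  case 2 then show ?case by (cases k) (auto simp: coeff_pCons split: nat.split)
next
  case (3 n)
  show ?case
  proof (cases k)
    case 0
    then show ?thesis using 3 unfolding herm_coeff_rec by auto
  next
    case (Suc k')
    have a: "coeff (hermite (Suc n)) k' = 0" using 3(1)[of k'] 3(3) Suc by auto
    have b: "coeff (hermite n) k = 0"
    proof (cases "n < k")
      case True then show ?thesis using 3(2) by auto
    next
      case False then show ?thesis using 3(2)[of k] 3(3) Suc by auto
    qed
    show ?thesis unfolding herm_coeff_rec using a b Suc by simp
  qed
qed

lemma aux_alg1:
  fixes X F P Y A s :: real
  assumes "X \<noteq> 0" "F \<noteq> 0" "P \<noteq> 0"
  shows "(-s) * ((2*X) * Y * A) / ((X*F) * (2*P) * 1) = -Y * (s * A / (F * P))"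
  using assms by (simp add: field_simps)

lemma aux_alg2:
  fixes M F P K Kr N1 N2 A s :: real
  assumes "M \<noteq> 0" "F \<noteq> 0" "P \<noteq> 0" "K \<noteq> 0" "Kr \<noteq> 0" "N2 = Kr + 2 * M"
  shows "(-1 * s) * (N1*A) / ((M*F)*(2*P)*K) - N1*(s*A/(F*P*(Kr*K))) = (-1 * s)*(N2*(N1*A))/((M*F)*(2*P)*(Kr*K))"
  using assms by (simp add: field_simps)

lemma herm_coeff_even:
  "k + 2 * m = n \<Longrightarrow> coeff (hermite n) k = (-1) ^ m * fact n / (fact m * 2 ^ m * fact k)"
proof (induction n arbitrary: k m rule: hermite.induct)
  case 1 then show ?case by simp
next
  case 2 then have "k = 1" "m = 0" by presburger+
  then show ?case by simp
next
  case (3 n)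
  show ?case
  proof (cases k)
    case 0
    then obtain m' where m': "m = Suc m'" "2 * m' = n" using 3(3) by (cases m) auto
    have IH: "coeff (hermite n) 0 = (-1) ^ m' * fact n / (fact m' * 2 ^ m')"
      using 3(2)[of 0 m'] m' by simp
    have "coeff (hermite (Suc (Suc n))) k = - real (Suc n) * ((-1) ^ m' * fact n / (fact m' * 2 ^ m'))"
      unfolding herm_coeff_rec IH[symmetric] using 0 by (simp add: algebra_simps)
    also have "\<dots> = (-1) ^ m * fact (Suc (Suc n)) / (fact m * 2 ^ m * fact k)"
    proof -
      have rn: "real n = 2 * real m'" using m' by simp
      have f1: "(fact (Suc (Suc n)) :: real) = (2 * (real m' + 1)) * (2 * real m' + 1) * fact n"
        by (simp add: rn algebra_simps)
      have f2: "(fact m :: real) = (real m' + 1) * fact m'" using m' by simp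
      have f3: "(2::real) ^ m = 2 * 2 ^ m'" "(-1::real) ^ m = - ((-1) ^ m')" using m' by auto
      have f4: "real (Suc n) = 2 * real m' + 1" using m' by simp
      have nz: "(fact m' :: real) \<noteq> 0" "(2::real) ^ m' \<noteq> 0" "real m' + 1 \<noteq> 0" by auto
      have L: "- real (Suc n) * ((-1) ^ m' * fact n / (fact m' * 2 ^ m')) = -(2*real m'+1) * ((-1)^m' * fact n / (fact m' * 2^m'))"
        by (simp only: f4)
      have R: "(-1) ^ m * fact (Suc (Suc n)) / (fact m * 2 ^ m * fact k) = (-((-1)^m')) * ((2 * (real m' + 1)) * (2 * real m' + 1) * fact n) / (((real m' + 1) * fact m') * (2 * 2^m') * 1)"
        by (simp only: f1 f2 f3 0 fact_0)
      show ?thesis unfolding L R by (rule aux_alg1[OF nz(3) nz(1) nz(2), symmetric])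
    qed
    finally show ?thesis .
  next
    case (Suc k')
    have A: "coeff (hermite (Suc n)) k' = (-1) ^ m * fact (Suc n) / (fact m * 2 ^ m * fact k')"
      using 3(1)[of k' m] 3(3) Suc by simp
    show ?thesis
    proof (cases m)
      case 0
      have B: "coeff (hermite n) k = 0" using herm_coeff_odd[of n k] 3(3) 0 by simp
      show ?thesis unfolding herm_coeff_rec using A B Suc 0 3(3) by simp
    next
      case (Suc m')
      have B: "coeff (hermite n) k = (-1) ^ m' * fact n / (fact m' * 2 ^ m' * fact k)"
        using 3(2)[of k m'] 3(3) Suc \<open>k = Suc k'\<close> by simp
      have "coeff (hermite (Suc (Suc n))) k
          = (-1) ^ m * fact (Suc n) / (fact m * 2 ^ m * fact k') - real (Suc n) * ((-1) ^ m' * fact n / (fact m' * 2 ^ m' * fact k))"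
        unfolding herm_coeff_rec A[symmetric] B[symmetric] using \<open>k = Suc k'\<close> by simp
      also have "\<dots> = (-1) ^ m * fact (Suc (Suc n)) / (fact m * 2 ^ m * fact k)"
      proof -
        have e: "real (Suc (Suc n)) = real (Suc k') + 2 * real (Suc m')" using 3(3) Suc \<open>k = Suc k'\<close> by simp
        have nz: "real (Suc m') \<noteq> 0" "(fact m' :: real) \<noteq> 0" "(2::real) ^ m' \<noteq> 0" "(fact k' :: real) \<noteq> 0" "real (Suc k') \<noteq> 0" by auto
        show ?thesis unfolding Suc \<open>k = Suc k'\<close> fact_Suc power_Suc
          by (rule aux_alg2[OF nz e])
      qed
      finally show ?thesis .
    qed
  qed
qed

lemma sum_even_split:
  fixes m :: nat and T :: "nat \<Rightarrow> 'a::comm_monoid_add"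
  shows "(\<Sum>i\<le>2*m. T i) = (\<Sum>r\<le>m. T (2*r)) + (\<Sum>r<m. T (2*r+1))"
proof (induction m)
  case 0 then show ?case by simp
next
  case (Suc m)
  have "(\<Sum>i\<le>2*Suc m. T i) = (\<Sum>i\<le>2*m. T i) + T (2*m+1) + T (2*m+2)"
    by (simp add: algebra_simps)
  then show ?case using Suc by (simp add: algebra_simps)
qed

lemma ffa_herm_odd: "i \<le> n \<Longrightarrow> odd i \<Longrightarrow> ffa n (hermite n) i = 0"
  unfolding ffa_def using herm_coeff_odd[of n "n - i"] by simp

lemma ffa_herm_even: "2*r \<le> n \<Longrightarrow> ffa n (hermite n) (2*r) = (-1) ^ r * fact n / (fact r * 2 ^ r * fact (n - 2*r))"
  unfolding ffa_def using herm_coeff_even[of "n - 2*r" r n] by simp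

lemma aux_alg3:
  fixes X Y A Z R Q P1 P2 s1 s2 :: real
  assumes "X \<noteq> 0" "Y \<noteq> 0" "A \<noteq> 0" "R \<noteq> 0" "Q \<noteq> 0" "P1 \<noteq> 0" "P2 \<noteq> 0" "Z \<noteq> 0"
  shows "(X * Y) / (A * Z) * (s1 * A / (R * P1 * X)) * (s2 * A / (Q * P2 * Y)) = (s1 * s2) * A / (Z*(P1*P2)) * (1/(R*Q))"
  using assms by (simp add: field_simps)

lemma inv_fact_sum: "(\<Sum>r\<le>m. 1 / ((fact r :: real) * fact (m - r))) = 2 ^ m / fact m"
proof -
  have "(\<Sum>r\<le>m. 1 / ((fact r :: real) * fact (m - r))) = (\<Sum>r\<le>m. real (m choose r) / fact m)"
    by (intro sum.cong refl) (simp add: binomial_fact field_simps)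
  also have "\<dots> = real (\<Sum>r\<le>m. m choose r) / fact m" by (simp add: sum_divide_distrib)
  also have "\<dots> = 2 ^ m / fact m" by (simp add: choose_row_sum)
  finally show ?thesis .
qed

lemma ffc_herm_even:
  assumes "2*m \<le> n"
  shows "ffc n (hermite n) (hermite n) (2*m) = (-1) ^ m * fact n / (fact (n - 2*m) * fact m)"
proof -
  define T where "T i = ffw n i (2*m) * ffa n (hermite n) i * ffa n (hermite n) (2*m - i)" for i
  have odd0: "T (2*r+1) = 0" if "r < m" for r
    unfolding T_def using ffa_herm_odd[of "2*r+1" n] that assms by simp
  have ev: "T (2*r) = (-1) ^ m * fact n / (fact (n - 2*m) * 2 ^ m) * (1 / (fact r * fact (m - r)))"
    if r: "r \<le> m" for r
  proof -
    have e1: "2*m - 2*r = 2*(m-r)" by simp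
    have a1: "ffa n (hermite n) (2*r) = (-1) ^ r * fact n / (fact r * 2 ^ r * fact (n - 2*r))"
      using ffa_herm_even[of r n] r assms by simp
    have a2: "ffa n (hermite n) (2*(m-r)) = (-1) ^ (m-r) * fact n / (fact (m-r) * 2 ^ (m-r) * fact (n - 2*(m-r)))"
      using ffa_herm_even[of "m-r" n] r assms by simp
    have w: "ffw n (2*r) (2*m) = (fact (n - 2*r) * fact (n - 2*(m-r))) / (fact n * fact (n - 2*m))"
      unfolding ffw_def e1 ..
    have s: "(-1::real) ^ r * (-1) ^ (m-r) = (-1) ^ m" "(2::real) ^ r * 2 ^ (m-r) = 2 ^ m"
      using r by (simp_all add: power_add[symmetric])
    show ?thesis unfolding T_def e1 a1 a2 w
      using aux_alg3[of "fact (n - 2*r)" "fact (n - 2*(m-r))" "fact n" "fact r" "fact (m-r)" "2^r" "2^(m-r)" "fact (n - 2*m)" "(-1)^r" "(-1)^(m-r)"]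
      unfolding s by simp
  qed
  have "ffc n (hermite n) (hermite n) (2*m) = (\<Sum>r\<le>m. T (2*r)) + (\<Sum>r<m. T (2*r+1))"
    unfolding ffc_def T_def[symmetric] by (rule sum_even_split)
  also have "(\<Sum>r<m. T (2*r+1)) = 0" using odd0 by simp
  also have "(\<Sum>r\<le>m. T (2*r)) = (-1) ^ m * fact n / (fact (n - 2*m) * 2 ^ m) * (\<Sum>r\<le>m. 1 / (fact r * fact (m - r)))"
    using ev by (simp add: sum_distrib_left)
  also have "\<dots> = (-1) ^ m * fact n / (fact (n - 2*m) * fact m)"
    unfolding inv_fact_sum by simp
  finally show ?thesis by simp
qed

lemma ffc_herm_odd:
  assumes "k \<le> n" "odd k"
  shows "ffc n (hermite n) (hermite n) k = 0"
  unfolding ffc_def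
proof (rule sum.neutral, intro ballI)
  fix i assume i: "i \<in> {..k}"
  show "ffw n i k * ffa n (hermite n) i * ffa n (hermite n) (k - i) = 0"
  proof (cases "odd i")
    case True then show ?thesis using ffa_herm_odd[of i n] i assms by simp
  next
    case False
    then have "odd (k - i)" using assms i by simp
    then show ?thesis using ffa_herm_odd[of "k-i" n] i assms by simp
  qed
qed

lemma herm_conv_coeff:
  "coeff (ffconv n (hermite n) (hermite n)) j = sqrt 2 ^ (n - j) * coeff (hermite n) j"
proof (cases "j \<le> n")
  case False
  then show ?thesis unfolding coeff_ffconv using herm_coeff_odd[of n j] by simp
next
  case True
  show ?thesis
  proof (cases "even (n - j)")
    case True
    then obtain m where m: "n - j = 2*m" by blast
    have j: "j = n - 2*m" "2*m \<le> n" using m \<open>j \<le> n\<close> by auto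
    have c: "coeff (hermite n) j = (-1) ^ m * fact n / (fact m * 2 ^ m * fact (n - 2*m))"
      using herm_coeff_even[of j m n] j by simp
    have sq: "sqrt 2 ^ (2*m) = (2::real) ^ m" by (simp add: power_mult)
    have neg: "((-1::real)^m)^2 = 1" by (simp add: power2_eq_square power_mult_distrib[symmetric])
    show ?thesis unfolding coeff_ffconv m c using \<open>j \<le> n\<close> ffc_herm_even[OF j(2)] sq neg
      by (simp add: power_mult field_simps)
  next
    case False
    then show ?thesis unfolding coeff_ffconv using ffc_herm_odd[of "n - j" n] herm_coeff_odd[of n j] \<open>j \<le> n\<close> by simp
  qed
qed

lemma coeff_mult_lin:
  "coeff (P * [:- a, 1:]) k = (case k of 0 \<Rightarrow> 0 | Suc k' \<Rightarrow> coeff P k') - a * coeff (P :: real poly) k"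
  by (simp add: mult.commute[of P] coeff_pCons split: nat.split)

lemma coeff_scale_roots:
  "coeff (poly_of_roots n (\<lambda>i. c * x i)) k = c ^ (n - k) * coeff (poly_of_roots n x) k"
proof (induction n arbitrary: k)
  case 0 then show ?case by (simp add: poly_of_roots_def coeff_1)
next
  case (Suc n)
  have e: "poly_of_roots (Suc n) a = poly_of_roots n a * [:- a n, 1:]" for a :: "nat \<Rightarrow> real"
    by (simp add: poly_of_roots_def)
  show ?case
  proof (cases k)
    case 0
    then show ?thesis unfolding e coeff_mult_lin using Suc by simp
  next
    case (Suc k')
    show ?thesis
    proof (cases "k' < n")
      case True
      have "c * c ^ (n - Suc k') = c ^ (n - k')" using True by (simp add: Suc_diff_Suc[symmetric])
      then show ?thesis unfolding e coeff_mult_lin using Suc.IH \<open>k = Suc k'\<close>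
        by (simp add: algebra_simps)
    next
      case False
      have z: "coeff (poly_of_roots n a) (Suc k') = 0" for a
        using poly_of_roots_monic[of n a] False by (simp add: coeff_eq_0)
      show ?thesis unfolding e coeff_mult_lin using Suc.IH \<open>k = Suc k'\<close> z False
        by simp
    qed
  qed
qed

lemma ffconv_scale:
  assumes P: "\<forall>k. coeff P k = c ^ (n - k) * coeff P0 k"
    and Q: "\<forall>k. coeff Q k = c ^ (n - k) * coeff Q0 k"
  shows "coeff (ffconv n P Q) j = c ^ (n - j) * coeff (ffconv n P0 Q0) j"
proof -
  have a: "ffa n P i = c ^ i * ffa n P0 i" "ffa n Q i = c ^ i * ffa n Q0 i" if "i \<le> n" for i
    unfolding ffa_def using P Q that by auto
  have ck: "ffc n P Q k = c ^ k * ffc n P0 Q0 k" if k: "k \<le> n" for k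
  proof -
    have "ffc n P Q k = (\<Sum>i\<le>k. c ^ k * (ffw n i k * ffa n P0 i * ffa n Q0 (k - i)))"
      unfolding ffc_def
    proof (intro sum.cong refl)
      fix i assume i: "i \<in> {..k}"
      then have "c ^ i * c ^ (k - i) = c ^ k" by (simp add: power_add[symmetric])
      then show "ffw n i k * ffa n P i * ffa n Q (k - i) = c ^ k * (ffw n i k * ffa n P0 i * ffa n Q0 (k - i))"
        using a[of i] a[of "k - i"] i k by (simp add: algebra_simps)
    qed
    then show ?thesis unfolding ffc_def by (simp add: sum_distrib_left)
  qed
  show ?thesis unfolding coeff_ffconv using ck[of "n - j"] by (simp add: algebra_simps)
qed

lemma herm_x:
  assumes n: "n \<ge> 1"
  defines "x \<equiv> sorted_roots n (hermite n)"
  shows "(\<forall>i j. i < j \<and> j < n \<longrightarrow> x i < x j) \<and> (\<forall>i. n \<le> i \<longrightarrow> x i = 0)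
         \<and> hermite n = poly_of_roots n x \<and> (\<Sum>i<n. x i) = 0"
proof -
  obtain m where m: "n = Suc m" using n by (cases n) auto
  obtain y where ymono: "\<forall>i j. i < j \<and> j < n \<longrightarrow> y i < y j" and yr: "hermite n = poly_of_roots n y"
    using herm_interlace[of m] unfolding m[symmetric] by blast
  define y' where "y' i = (if i < n then y i else 0)" for i
  have e: "poly_of_roots n y' = poly_of_roots n y" unfolding poly_of_roots_def y'_def by (rule prod.cong) auto
  have y'mono: "\<forall>i j. i < j \<and> j < n \<longrightarrow> y' i < y' j" using ymono unfolding y'_def by auto
  have y'zero: "\<forall>i. n \<le> i \<longrightarrow> y' i = 0" unfolding y'_def by auto
  have xy: "x = y'" unfolding x_def using sorted_roots_eq[OF y'mono y'zero] e yr by simp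
  have xmono: "\<forall>i j. i < j \<and> j < n \<longrightarrow> x i < x j" and xzero: "\<forall>i. n \<le> i \<longrightarrow> x i = 0"
    and xr: "hermite n = poly_of_roots n x" using y'mono y'zero e yr xy by auto
  define x' where "x' i = (if i < n then - x (n - Suc i) else 0)" for i
  have x'mono: "\<forall>i j. i < j \<and> j < n \<longrightarrow> x' i < x' j"
  proof (intro allI impI)
    fix i j assume ij: "i < j \<and> j < n"
    then have "n - Suc j < n - Suc i \<and> n - Suc i < n" by auto
    then have "x (n - Suc j) < x (n - Suc i)" using xmono by blast
    then show "x' i < x' j" unfolding x'_def using ij by auto
  qed
  have x'zero: "\<forall>i. n \<le> i \<longrightarrow> x' i = 0" unfolding x'_def by auto
  have x'r: "\<forall>i<n. poly (hermite n) (x' i) = 0"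
  proof (intro allI impI)
    fix i assume i: "i < n"
    have "poly (hermite n) (x (n - Suc i)) = 0" unfolding xr poly_of_roots_poly
      by (rule prod_zero) (use i in auto)
    then show "poly (hermite n) (x' i) = 0" unfolding x'_def using i herm_parity[of n "x (n - Suc i)"] by simp
  qed
  have "sorted_roots n (hermite n) = x'"
    using sorted_roots_of_roots[of "hermite n" n x'] herm_monic[of n] x'mono x'zero x'r by auto
  then have xx': "x = x'" unfolding x_def .
  have "(\<Sum>i<n. x i) = (\<Sum>i<n. x (n - Suc i))"
    using sum.atLeastLessThan_rev[of x 0 n] by (simp add: atLeast0LessThan)
  also have "\<dots> = - (\<Sum>i<n. x i)"
  proof -
    have "(\<Sum>i<n. x i) = (\<Sum>i<n. x' i)" using xx' by simp
    also have "\<dots> = (\<Sum>i<n. - x (n - Suc i))" unfolding x'_def by (rule sum.cong) auto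
    finally show ?thesis by (simp add: sum_negf)
  qed
  finally have "(\<Sum>i<n. x i) = 0" by simp
  then show ?thesis using xmono xzero xr by blast
qed

lemma stam_algebra:
  fixes S p :: real
  assumes S: "S > 0" and p: "p > 1"
  shows "(S / sqrt 2 powr p) powr (-1 / (p - 1)) - S powr (-1 / (p - 1)) - S powr (-1 / (p - 1))
       = S powr (-1 / (p - 1)) * (2 powr (p / (2 * (p - 1))) - 2)"
proof -
  have s2: "sqrt 2 = (2::real) powr (1/2)" by (simp add: powr_half_sqrt)
  have "(S / sqrt 2 powr p) powr (-1 / (p - 1)) = S powr (-1 / (p - 1)) / (sqrt 2 powr p) powr (-1 / (p - 1))"
    by (rule powr_divide)
  also have "(sqrt 2 powr p) powr (-1 / (p - 1)) = 2 powr (- (p / (2 * (p - 1))))"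
    unfolding s2 powr_powr using p by (simp add: field_simps)
  also have "S powr (-1 / (p - 1)) / 2 powr (- (p / (2 * (p - 1)))) = S powr (-1 / (p - 1)) * 2 powr (p / (2 * (p - 1)))"
    by (simp add: powr_minus_divide)
  finally show ?thesis by (simp add: algebra_simps)
qed

lemma pnorm_scale:
  fixes S p :: real
  assumes S: "S > 0" and p: "p > 1"
  shows "(S / sqrt 2 powr p) powr (1 / p) / S powr (1 / p) = 2 powr (-1/2)"
proof -
  have "(S / sqrt 2 powr p) powr (1 / p) = S powr (1/p) / sqrt 2"
    unfolding powr_divide powr_powr using p by simp
  then have "(S / sqrt 2 powr p) powr (1 / p) / S powr (1 / p) = 1 / sqrt 2" using S by simp
  also have "\<dots> = 2 powr (-1/2)" by (simp add: powr_half_sqrt[symmetric] powr_minus_divide)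
  finally show ?thesis .
qed

theorem mainTheorem3:
  fixes n :: nat and p :: real
  assumes "n \<ge> 2" and "p > 1"
  shows "contraction_ratio n p = 2 powr (-1/2)
    \<and> (p < 2 \<longrightarrow> stam_deficit n p (hermite_roots n) (hermite_roots n) > 0)
    \<and> (p = 2 \<longrightarrow> stam_deficit n p (hermite_roots n) (hermite_roots n) = 0)
    \<and> (p > 2 \<longrightarrow> stam_deficit n p (hermite_roots n) (hermite_roots n) < 0
          \<and> \<not> (Phi n p (Omega n (hermite_roots n) (hermite_roots n)) powr (-1 / (p - 1))
                 \<ge> Phi n p (hermite_roots n) powr (-1 / (p - 1))
                   + Phi n p (hermite_roots n) powr (-1 / (p - 1))))"
proof -
  have n1: "n \<ge> 1" using assms(1) by simp
  have p: "p > 1" using assms(2) .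
  define x where "x = sorted_roots n (hermite n)"
  have xmono: "\<forall>i j. i < j \<and> j < n \<longrightarrow> x i < x j" and xzero: "\<forall>i. n \<le> i \<longrightarrow> x i = 0"
    and xr: "hermite n = poly_of_roots n x" and xsum: "(\<Sum>i<n. x i) = 0"
    using herm_x[OF n1] unfolding x_def by blast+
  define v where "v = (\<Sum>i<n. (x i)\<^sup>2) / real n"
  have hr: "hermite_roots n = (\<lambda>i. if i < n then x i / sqrt v else 0)"
    unfolding hermite_roots_def Let_def x_def[symmetric] xsum v_def by (rule ext) simp
  have vpos: "v > 0"
  proof -
    have "x 0 < x 1" using xmono assms(1) by auto
    then have "x 0 \<noteq> 0 \<or> x 1 \<noteq> 0" by auto
    then obtain i where i0: "i \<in> {0,1}" "x i \<noteq> 0" by blast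
    then have i: "i < n" "x i \<noteq> 0" using assms(1) by auto
    have "(\<Sum>i<n. (x i)\<^sup>2) > 0" by (rule sum_pos2[of _ i]) (use i in auto)
    then show ?thesis unfolding v_def using n1 by simp
  qed
  define c where "c = 1 / sqrt v"
  have cpos: "c > 0" unfolding c_def using vpos by simp
  define h where "h = hermite_roots n"
  have h: "h i = (if i < n then c * x i else 0)" for i unfolding h_def hr c_def by simp
  have hmono: "\<forall>i j. i < j \<and> j < n \<longrightarrow> h i < h j" unfolding h using xmono cpos by auto
  define \<gamma> where "\<gamma> i = sqrt 2 * h i" for i
  have gmono: "\<forall>i j. i < j \<and> j < n \<longrightarrow> \<gamma> i < \<gamma> j" unfolding \<gamma>_def using hmono by auto
  have gzero: "\<forall>i. n \<le> i \<longrightarrow> \<gamma> i = 0" unfolding \<gamma>_def h by auto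
  have ph: "poly_of_roots n h = poly_of_roots n (\<lambda>i. c * x i)"
    unfolding poly_of_roots_def h by (rule prod.cong) auto
  have pg: "poly_of_roots n \<gamma> = poly_of_roots n (\<lambda>i. (sqrt 2 * c) * x i)"
    unfolding poly_of_roots_def \<gamma>_def h by (rule prod.cong) auto
  have fh: "\<forall>k. coeff (poly_of_roots n h) k = c ^ (n - k) * coeff (hermite n) k"
    unfolding ph xr coeff_scale_roots by simp
  have conv: "ffconv n (poly_of_roots n h) (poly_of_roots n h) = poly_of_roots n \<gamma>"
  proof (rule poly_eqI)
    fix k
    show "coeff (ffconv n (poly_of_roots n h) (poly_of_roots n h)) k = coeff (poly_of_roots n \<gamma>) k"
      unfolding ffconv_scale[OF fh fh] herm_conv_coeff pg coeff_scale_roots xr[symmetric]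
      by (simp add: power_mult_distrib)
  qed
  have Om: "Omega n h h = \<gamma>" unfolding Omega_def conv by (rule sorted_roots_eq[OF gmono gzero refl])
  have Esum: "(\<Sum>j<n. Ematrix n i j * score n h j) = score n \<gamma> i" if i: "i < n" for i
    unfolding Ematrix_def h_def[symmetric] using Ederiv[OF hmono gmono gzero conv n1 i] .
  have sc: "score n \<gamma> i = score n h i / sqrt 2" for i
    unfolding score_def \<gamma>_def sum_divide_distrib
    by (rule sum.cong) (auto simp: right_diff_distrib[symmetric])
  define S where "S = (\<Sum>i<n. \<bar>score n h i\<bar> powr p)"
  have Spos: "S > 0"
  proof -
    have "0 < (\<Sum>j\<in>{..<n} - {0}. - (1 / (h 0 - h j)))"
    proof (rule sum_pos)
      have "1 \<in> {..<n} - {0}" using assms(1) by auto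
      then show "{..<n} - {0} \<noteq> {}" by blast
      fix j assume "j \<in> {..<n} - {0}"
      then have "h 0 < h j" using hmono by auto
      then show "0 < - (1 / (h 0 - h j))" by simp
    qed simp
    then have "score n h 0 < 0" unfolding score_def by (simp add: sum_negf)
    then have "\<bar>score n h 0\<bar> powr p > 0" by simp
    then show ?thesis unfolding S_def by (intro sum_pos2[of _ 0]) (use n1 in auto)
  qed
  have Phih: "Phi n p h = S" unfolding Phi_def S_def ..
  have Phig: "Phi n p \<gamma> = S / sqrt 2 powr p"
    unfolding Phi_def S_def sc sum_divide_distrib by (simp add: powr_divide)
  have cr: "contraction_ratio n p = 2 powr (-1/2)"
  proof -
    have "pnorm n p (\<lambda>i. \<Sum>j<n. Ematrix n i j * score n (hermite_roots n) j) = (S / sqrt 2 powr p) powr (1 / p)"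
      unfolding pnorm_def h_def[symmetric] Phig[symmetric] Phi_def
      by (rule arg_cong[where f="\<lambda>t. t powr (1/p)"], rule sum.cong) (auto simp: Esum)
    moreover have "pnorm n p (score n (hermite_roots n)) = S powr (1/p)"
      unfolding pnorm_def h_def[symmetric] S_def ..
    ultimately show ?thesis unfolding contraction_ratio_def using pnorm_scale[OF Spos p] by simp
  qed
  have def_eq: "stam_deficit n p (hermite_roots n) (hermite_roots n) = S powr (-1 / (p - 1)) * (2 powr (p / (2 * (p - 1))) - 2)"
    unfolding stam_deficit_def h_def[symmetric] Om Phig Phih by (rule stam_algebra[OF Spos p])
  have Se: "S powr (-1 / (p - 1)) > 0" using Spos by simp
  have lt: "p < 2 \<Longrightarrow> 2 powr (p / (2 * (p - 1))) > 2"
  proof -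
    assume "p < 2"
    then have "p / (2 * (p - 1)) > 1" using p by (simp add: field_simps)
    then have "2 powr (p / (2 * (p - 1))) > (2::real) powr 1" by (intro powr_less_mono) auto
    then show ?thesis by simp
  qed
  have gt: "p > 2 \<Longrightarrow> 2 powr (p / (2 * (p - 1))) < 2"
  proof -
    assume "p > 2"
    then have "p / (2 * (p - 1)) < 1" using p by (simp add: field_simps)
    then have "2 powr (p / (2 * (p - 1))) < (2::real) powr 1" by (intro powr_less_mono) auto
    then show ?thesis by simp
  qed
  have eq: "p = 2 \<Longrightarrow> 2 powr (p / (2 * (p - 1))) = 2" by simp
  show ?thesis
  proof (intro conjI impI)
    show "contraction_ratio n p = 2 powr (-1/2)" by (rule cr)
  next
    assume "p < 2" then show "stam_deficit n p (hermite_roots n) (hermite_roots n) > 0"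
      unfolding def_eq using Se lt by simp
  next
    assume "p = 2" then show "stam_deficit n p (hermite_roots n) (hermite_roots n) = 0"
      unfolding def_eq using eq by simp
  next
    assume "p > 2" then show "stam_deficit n p (hermite_roots n) (hermite_roots n) < 0"
      unfolding def_eq using Se gt by (simp add: mult_pos_neg)
  next
    assume p2: "p > 2"
    have "stam_deficit n p (hermite_roots n) (hermite_roots n) < 0"
      unfolding def_eq using Se gt[OF p2] by (simp add: mult_pos_neg)
    then show "\<not> (Phi n p (Omega n (hermite_roots n) (hermite_roots n)) powr (-1 / (p - 1))
                 \<ge> Phi n p (hermite_roots n) powr (-1 / (p - 1))
                   + Phi n p (hermite_roots n) powr (-1 / (p - 1)))"
      unfolding stam_deficit_def by simp
  qed
qed

end
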